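(* For any poset $P$ on $\{1,2,\ldots,n\}$, $$\sum_{f\in\mathcal{A}(P)}t^{\nu(f)}\mathbf{x}^f=\sum_{w\in\mathcal{L}(P)}\frac{t^{\mathrm{des}_P(w)}\prod_{i\in\mathrm{Des}(w)}\mathbf{x}^{w|_{[1,i]}}}{\prod_{i=1}^n\bigl(1-t^{c_P(w|_{[1,i]})}\mathbf{x}^{w|_{[1,i]}}\bigr)}.$$ Consequently: setting $t=1$, $\sum_{f\in\mathcal{A}(P)}\mathbf{x}^f=\sum_{w\in\mathcal{L}(P)}\frac{\prod_{i\in\mathrm{Des}(w)}\mathbf{x}^{w|_{[1,i]}}}{\prod_{i=1}^n(1-\mathbf{x}^{w|_{[1,i]}})}$; setting $x_i=q$ for all $i$, $\sum_{f\in\mathcal{A}(P)}t^{\nu(f)}q^{|f|}=\sum_{w\in\mathcal{L}(P)}\frac{t^{\mathrm{des}_P(w)}q^{\mathrm{maj}(w)}}{\prod_{i=1}^n(1-t^{c_P(w|_{[1,i]})}q^i)}$; further setting $q=1$, $\sum_{f\in\mathcal{A}(P)}t^{\nu(f)}=\sum_{w\in\mathcal{L}(P)}\frac{t^{\mathrm{des}_P(w)}}{\prod_{i=1}^n(1-t^{c_P(w|_{[1,i]})})}$; setting $t=1$ and $x_i=q$ for all $i$, $(1-q)(1-q^2)\cdots(1-q^n)\sum_{f\in\mathcal{A}(P)}q^{|f|}=\sum_{w\in\mathcal{L}(P)}q^{\mathrm{maj}(w)}$; and hence $\lim_{q\to1}(1-q)(1-q^2)\cdots(1-q^n)\sum_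{f\in\mathcal{A}(P)}q^{|f|}=|\mathcal{L}(P)|$.
   Context: All posets are finite, on the label set $\{1,\ldots,n\}$. A $P$-partition is a map $f:\{1,\ldots,n\}\to\mathbb{N}$ such that $i<_Pj$ implies $f(i)\ge f(j)$, with strict inequality $f(i)>f(j)$ whenever $i<_Pj$ and $i>j$ as integers; $\mathcal{A}(P)$ is the set of these. $\mathbf{x}^f=x_1^{f(1)}\cdots x_n^{f(n)}$, $|f|=\sum_if(i)$, and $\mathbf{x}^A=\prod_{i\in A}x_i$ for $A\subseteq\{1,\ldots,n\}$. For such $f$, $\nu(f)=\sum_{k\ge1}c_P(\{j:f(j)\ge k\})$, where for an order ideal $J$, $c_P(J)$ is the number of connected components of the Hasse diagram of $P$ restricted to $J$. $\mathcal{L}(P)$ is the set of linear extensions of $P$: permutations $w=(w(1),\ldots,w(n))$ with $w(i)<_Pw(j)\Rightarrow i<j$. $w|_{[1,i]}=\{w(1),\ldots,w(i)\}$. $\mathrm{Des}(w)=\{i\in\{1,\ldots,n-1\}:w(i)>w(i+1)\}$, $\mathrm{maj}(w)=\sum_{i\in\mathrm{Des}(w)}i$, and $\mathrm{des}_P(w)=\sum_{i\in\mathrm{Des}(w)}c_P(w|_{[1,i]})$. *)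

theory Defs
  imports "HOL-Analysis.Analysis"
begin

text \<open>A poset on the labels 1..n is a (reflexive) partial order P on {1..n}, given as a
relation set; i <_P j means (i,j) in P and i different from j.\<close>

definition PPartitions :: "(nat \<times> nat) set \<Rightarrow> nat \<Rightarrow> (nat \<Rightarrow> nat) set" where
  "PPartitions P n = {f. (\<forall>i. i \<notin> {1..n} \<longrightarrow> f i = 0) \<and>
      (\<forall>i j. (i, j) \<in> P \<and> i \<noteq> j \<longrightarrow> f j \<le> f i \<and> (j < i \<longrightarrow> f j < f i))}"

definition covers :: "(nat \<times> nat) set \<Rightarrow> nat \<Rightarrow> nat \<Rightarrow> bool" where
  "covers P i j \<longleftrightarrow> (i, j) \<in> P \<and> i \<noteq> j \<and>
      \<not> (\<exists>k. (i, k) \<in> P \<and> (k, j) \<in> P \<and> k \<noteq> i \<and> k \<noteq> j)"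

definition hasse_edges :: "(nat \<times> nat) set \<Rightarrow> nat set \<Rightarrow> (nat \<times> nat) set" where
  "hasse_edges P J = {(i, j). i \<in> J \<and> j \<in> J \<and> (covers P i j \<or> covers P j i)}"

definition cP :: "(nat \<times> nat) set \<Rightarrow> nat set \<Rightarrow> nat" where
  "cP P J = card (J // ((hasse_edges P J)\<^sup>*))"

definition fsize :: "nat \<Rightarrow> (nat \<Rightarrow> nat) \<Rightarrow> nat" where
  "fsize n f = (\<Sum>i\<in>{1..n}. f i)"

text \<open>nu(f) = sum over k >= 1 of c_P({j : f j >= k}); terms with k > |f| vanish.\<close>
definition nu :: "(nat \<times> nat) set \<Rightarrow> nat \<Rightarrow> (nat \<Rightarrow> nat) \<Rightarrow> nat" where
  "nu P n f = (\<Sum>k\<in>{1..fsize n f}. cP P {j \<in> {1..n}. k \<le> f j})"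

definition xpow :: "(nat \<Rightarrow> 'a::comm_ring_1) \<Rightarrow> nat \<Rightarrow> (nat \<Rightarrow> nat) \<Rightarrow> 'a" where
  "xpow x n f = (\<Prod>i\<in>{1..n}. x i ^ f i)"

definition xset :: "(nat \<Rightarrow> 'a::comm_ring_1) \<Rightarrow> nat set \<Rightarrow> 'a" where
  "xset x A = (\<Prod>i\<in>A. x i)"

text \<open>Linear extensions as lists w = [w(1),...,w(n)]; w(i) is w ! (i-1),
  and w restricted to [1,i] is set (take i w).\<close>
definition lin_ext :: "(nat \<times> nat) set \<Rightarrow> nat \<Rightarrow> nat list set" where
  "lin_ext P n = {w. distinct w \<and> set w = {1..n} \<and>
      (\<forall>a<n. \<forall>b<n. (w ! a, w ! b) \<in> P \<and> w ! a \<noteq> w ! b \<longrightarrow> a < b)}"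

definition Des :: "nat list \<Rightarrow> nat set" where
  "Des w = {i \<in> {1..length w - 1}. w ! i < w ! (i - 1)}"

definition maj :: "nat list \<Rightarrow> nat" where
  "maj w = (\<Sum>i\<in>Des w. i)"

definition desP :: "(nat \<times> nat) set \<Rightarrow> nat list \<Rightarrow> nat" where
  "desP P w = (\<Sum>i\<in>Des w. cP P (set (take i w)))"

end

theory Submission
  imports Defs
begin


lemma has_sum_geom_UNIV:
  fixes z :: complex assumes "norm z < 1"
  shows "((\<lambda>k. z ^ k) has_sum (1 / (1 - z))) UNIV"
proof -
  have "(\<lambda>k. z ^ k) sums (1 / (1 - z))" using geometric_sums[OF assms] .
  moreover have "summable (\<lambda>k. norm (z ^ k))"
    using assms by (auto simp: norm_power intro!: summable_geometric)
  ultimately show ?thesis by (intro norm_summable_imp_has_sum)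
qed

lemma prod_geom:
  fixes z :: "nat \<Rightarrow> complex"
  assumes "finite I"
  shows "(\<And>i. i \<in> I \<Longrightarrow> norm (z i) < 1) \<Longrightarrow> (\<And>i. i \<in> I \<Longrightarrow> ((\<lambda>k. z i ^ k) has_sum G i) (B i)) \<Longrightarrow>
    ((\<lambda>m. \<Prod>i\<in>I. z i ^ m i) has_sum (\<Prod>i\<in>I. G i))
      {m. (\<forall>i. i \<notin> I \<longrightarrow> m i = 0) \<and> (\<forall>i\<in>I. m i \<in> B i)}"
  using assms
proof (induction I rule: finite_induct)
  case empty
  have "{m::nat\<Rightarrow>nat. (\<forall>i. i \<notin> {} \<longrightarrow> m i = 0) \<and> (\<forall>i\<in>{}. m i \<in> B i)} = {\<lambda>_. 0}"
    by auto
  then show ?case by (simp add: has_sum_finiteI)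
next
  case (insert a I)
  define F where "F = {m::nat\<Rightarrow>nat. (\<forall>i. i \<notin> I \<longrightarrow> m i = 0) \<and> (\<forall>i\<in>I. m i \<in> B i)}"
  define c where "c m = (\<Prod>i\<in>I. z i ^ m i)" for m :: "nat \<Rightarrow> nat"
  have IH0: "((\<lambda>m. \<Prod>i\<in>I. z i ^ m i) has_sum (\<Prod>i\<in>I. G i)) F"
    using insert.IH insert.prems unfolding F_def by auto
  have ceq: "c = (\<lambda>m. \<Prod>i\<in>I. z i ^ m i)" by (rule ext) (simp add: c_def)
  have IH: "(c has_sum (\<Prod>i\<in>I. G i)) F" using IH0 ceq by simp
  have ga: "((\<lambda>k. z a ^ k) has_sum G a) (B a)" using insert by auto
  have za: "norm (z a) < 1" using insert by auto
  have fib: "((\<lambda>k. c m * z a ^ k) has_sum (c m * G a)) (B a)" for m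
    by (rule has_sum_cmult_right[OF ga])
  have g: "((\<lambda>m. c m * G a) has_sum ((\<Prod>i\<in>I. G i) * G a)) F"
    by (rule has_sum_cmult_left[OF IH])
  have nsum: "(\<lambda>k. norm (z a ^ k)) summable_on B a"
  proof -
    have "(\<lambda>k. norm (z a ^ k)) summable_on UNIV"
      using za by (intro norm_summable_imp_summable_on) (auto simp: norm_power intro!: summable_geometric)
    then show ?thesis by (rule summable_on_subset_banach) auto
  qed
  have summ: "(\<lambda>(m,k). c m * z a ^ k) summable_on Sigma F (\<lambda>_. B a)"
  proof -
    have "(\<lambda>p. norm ((\<lambda>(m,k). c m * z a ^ k) p)) summable_on Sigma F (\<lambda>_. B a)"
    proof (subst Infinite_Sum.abs_summable_on_Sigma_iff, intro conjI ballI)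
      fix m assume "m \<in> F"
      show "(\<lambda>k. norm ((\<lambda>(m,k). c m * z a ^ k) (m, k))) summable_on B a"
        using summable_on_cmult_right[OF nsum, of "norm (c m)"] by (simp add: norm_mult)
    next
      have cs: "(\<lambda>m. norm (c m)) summable_on F" using IH summable_on_iff_abs_summable_on_complex
        by (metis summable_on_def)
      have "(\<lambda>m. norm (c m) * (\<Sum>\<^sub>\<infinity>k\<in>B a. norm (z a ^ k))) summable_on F"
        using summable_on_cmult_left[OF cs] .
      moreover have "norm (\<Sum>\<^sub>\<infinity>y\<in>B a. norm ((\<lambda>(m, k). c m * z a ^ k) (m, y)))
          = norm (c m) * (\<Sum>\<^sub>\<infinity>k\<in>B a. norm (z a ^ k))" for m
        by (simp add: norm_mult infsum_cmult_right' infsum_nonneg)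
      ultimately show "(\<lambda>m. norm (\<Sum>\<^sub>\<infinity>y\<in>B a. norm ((\<lambda>(m, k). c m * z a ^ k) (m, y)))) summable_on F"
        by simp
    qed
    then show ?thesis using summable_on_iff_abs_summable_on_complex by blast
  qed
  have sig: "((\<lambda>(m,k). c m * z a ^ k) has_sum ((\<Prod>i\<in>I. G i) * G a)) (Sigma F (\<lambda>_. B a))"
    by (rule has_sum_SigmaI[OF _ g summ]) (use fib in simp)
  show ?case
  proof -
    have "((\<lambda>(m,k). c m * z a ^ k) has_sum ((\<Prod>i\<in>I. G i) * G a)) (Sigma F (\<lambda>_. B a))
      = ((\<lambda>m. \<Prod>i\<in>insert a I. z i ^ m i) has_sum (\<Prod>i\<in>insert a I. G i))
        {m. (\<forall>i. i \<notin> insert a I \<longrightarrow> m i = 0) \<and> (\<forall>i\<in>insert a I. m i \<in> B i)}"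
    proof (rule has_sum_reindex_bij_witness[where j = "\<lambda>(m,k). m(a := k)" and i = "\<lambda>m. (m(a := 0), m a)"])
      fix p assume "p \<in> Sigma F (\<lambda>_. B a)"
      then obtain m k where p: "p = (m,k)" "m \<in> F" "k \<in> B a" by auto
      then have "m a = 0" using insert(2) by (auto simp: F_def)
      then show "(\<lambda>m. (m(a := 0), m a)) ((\<lambda>(m, k). m(a := k)) p) = p" using p by auto
      show "(\<lambda>(m, k). m(a := k)) p \<in> {m. (\<forall>i. i \<notin> insert a I \<longrightarrow> m i = 0) \<and> (\<forall>i\<in>insert a I. m i \<in> B i)}"
        using p by (auto simp: F_def)
      have "(\<Prod>i\<in>I. z i ^ (m(a := k)) i) = c m"
        unfolding c_def using insert(2) by (intro prod.cong) auto
      then show "(\<Prod>i\<in>insert a I. z i ^ ((\<lambda>(m, k). m(a := k)) p) i) = (\<lambda>(m, k). c m * z a ^ k) p"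
        using p insert(1,2) by (simp add: mult.commute)
    next
      fix m assume "m \<in> {m. (\<forall>i. i \<notin> insert a I \<longrightarrow> m i = 0) \<and> (\<forall>i\<in>insert a I. m i \<in> B i)}"
      then show "(\<lambda>(m, k). m(a := k)) ((\<lambda>m. (m(a := 0), m a)) m) = m"
        and "(\<lambda>m. (m(a := 0), m a)) m \<in> Sigma F (\<lambda>_. B a)"
        using insert(2) by (auto simp: F_def)
    next
      show "(\<Prod>i\<in>I. G i) * G a = (\<Prod>i\<in>insert a I. G i)"
        using insert(1,2) by (simp add: mult.commute)
    qed
    then show ?thesis using sig by simp
  qed
qed




definition Phi :: "nat \<Rightarrow> nat list \<Rightarrow> (nat \<Rightarrow> nat) \<Rightarrow> nat \<Rightarrow> nat" where
  "Phi n w m a = (\<Sum>i\<in>{1..n}. if a \<in> set (take i w) then m i else 0)"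
definition Mset :: "nat \<Rightarrow> nat list \<Rightarrow> (nat \<Rightarrow> nat) set" where
  "Mset n w = {m. (\<forall>i. i \<notin> {1..n} \<longrightarrow> m i = 0) \<and> (\<forall>i\<in>Des w. 1 \<le> m i)}"
definition key :: "nat \<Rightarrow> (nat \<Rightarrow> nat) \<Rightarrow> nat \<Rightarrow> int" where
  "key n f a = int a - int (f a) * int (Suc n)"

lemma key_le:
  assumes "a \<in> {1..n}" "b \<in> {1..n}"
  shows "key n f a \<le> key n f b \<longleftrightarrow> (f b < f a \<or> (f a = f b \<and> a \<le> b))"
proof -
  have A: "key n f a < key n f b" if "f b < f a" "a \<in> {1..n}" "b \<in> {1..n}" for a b
  proof -
    have "int (f b) + 1 \<le> int (f a)" using that by simp
    then have "(int (f b) + 1) * int (Suc n) \<le> int (f a) * int (Suc n)"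
      by (rule mult_right_mono) simp
    then show ?thesis using that unfolding key_def by (simp add: algebra_simps)
  qed
  show ?thesis
  proof (cases "f a = f b")
    case True then show ?thesis by (simp add: key_def)
  next
    case False
    then have "f a < f b \<or> f b < f a" by arith
    then show ?thesis using A[of b a] A[of a b] assms by auto
  qed
qed

lemma inj_key: "inj_on (key n f) {1..n}"
proof (rule inj_onI)
  fix a b assume "a \<in> {1..n}" "b \<in> {1..n}" "key n f a = key n f b"
  then show "a = b" using key_le[of a n b f] key_le[of b n a f] by auto
qed
definition sortw :: "nat \<Rightarrow> (nat \<Rightarrow> nat) \<Rightarrow> nat list" where
  "sortw n f = sort_key (key n f) [1..<Suc n]"
definition mof :: "nat \<Rightarrow> nat list \<Rightarrow> (nat \<Rightarrow> nat) \<Rightarrow> nat \<Rightarrow> nat" where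
  "mof n w f i = (if i \<in> {1..n} then f (w!(i-1)) - (if i < n then f (w!i) else 0) else 0)"
definition S :: "nat \<Rightarrow> (nat \<Rightarrow> nat) \<Rightarrow> nat \<Rightarrow> nat" where
  "S n m p = (\<Sum>i\<in>{Suc p..n}. m i)"

lemma lin_ext_facts:
  assumes "w \<in> lin_ext P n"
  shows "distinct w" "set w = {1..n}" "length w = n"
proof -
  show d: "distinct w" and s: "set w = {1..n}" using assms by (auto simp: lin_ext_def)
  show "length w = n" using distinct_card[OF d] s by simp
qed

lemma nth_in_take:
  assumes "distinct w" "p < length w"
  shows "(w ! p \<in> set (take i w)) = (p < i)"
proof
  assume "w ! p \<in> set (take i w)"
  then obtain q where q: "q < length (take i w)" "take i w ! q = w ! p"
    by (auto simp: in_set_conv_nth)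
  then have "q < i" "q < length w" "w ! q = w ! p" by auto
  then show "p < i" using assms nth_eq_iff_index_eq by metis
next
  assume "p < i"
  then show "w ! p \<in> set (take i w)" using assms
    by (metis in_set_conv_nth length_take min_less_iff_conj nth_take)
qed

lemma Phi_nth:
  assumes "distinct w" "length w = n" "p < n"
  shows "Phi n w m (w ! p) = S n m p"
proof -
  have "Phi n w m (w ! p) = (\<Sum>i\<in>{1..n}. if p < i then m i else 0)"
    unfolding Phi_def using nth_in_take[of w p] assms by simp
  also have "\<dots> = (\<Sum>i\<in>{i\<in>{1..n}. p < i}. m i)"
    by (rule sum.inter_filter[symmetric]) simp
  also have "{i\<in>{1..n}. p < i} = {Suc p..n}" by auto
  finally show ?thesis by (simp add: S_def)
qed

lemma Phi_out:
  assumes "a \<notin> set w"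
  shows "Phi n w m a = 0"
  unfolding Phi_def using assms by (auto intro!: sum.neutral dest: in_set_takeD)

lemma S_step: "p < n \<Longrightarrow> S n m p = m (Suc p) + S n m (Suc p)"
  unfolding S_def by (simp add: sum.atLeast_Suc_atMost)

lemma S_n: "S n m n = 0"
  unfolding S_def by simp

lemma S_anti: "p \<le> q \<Longrightarrow> S n m q \<le> S n m p"
  unfolding S_def by (rule sum_mono2) auto

lemma Des_sub: "Des w \<subseteq> {1..length w - 1}"
  unfolding Des_def by auto

lemma chain:
  assumes "length w = n" "m \<in> Mset n w" "p \<le> q" "q < n"
  shows "S n m q < S n m p \<or> w ! p \<le> w ! q"
  using assms(3,4)
proof (induction q rule: dec_induct)
  case base then show ?case by simp
next
  case (step q)
  have st: "S n m q = m (Suc q) + S n m (Suc q)" using S_step step by simp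
  show ?case
  proof (cases "m (Suc q) = 0")
    case True
    then have "Suc q \<notin> Des w" using assms(2) by (auto simp: Mset_def)
    then have "w ! q \<le> w ! Suc q" using step assms(1) by (auto simp: Des_def)
    then show ?thesis using step st True by auto
  next
    case False
    then have "S n m (Suc q) < S n m q" using st by simp
    moreover have "S n m q \<le> S n m p" using S_anti step by simp
    ultimately show ?thesis by simp
  qed
qed

lemma Phi_in_PP:
  assumes po: "partial_order_on {1..n} P" and w: "w \<in> lin_ext P n" and m: "m \<in> Mset n w"
  shows "Phi n w m \<in> PPartitions P n"
proof -
  note wf = lin_ext_facts[OF w]
  have sub: "P \<subseteq> {1..n} \<times> {1..n}" using partial_order_onD(4)[OF po] .
  have pos: "\<exists>p<n. a = w ! p" if "a \<in> {1..n}" for a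
    using that wf by (metis in_set_conv_nth)
  show ?thesis unfolding PPartitions_def
  proof (intro CollectI conjI allI impI)
    fix i assume "i \<notin> {1..n}" then show "Phi n w m i = 0" using Phi_out wf by simp
  next
    fix i j assume ij: "(i, j) \<in> P \<and> i \<noteq> j"
    then have "i \<in> {1..n}" "j \<in> {1..n}" using sub by auto
    then obtain p q where pq: "p < n" "q < n" "i = w ! p" "j = w ! q" using pos by blast
    have "p < q" using w ij pq unfolding lin_ext_def by auto
    have fi: "Phi n w m i = S n m p" and fj: "Phi n w m j = S n m q"
      using Phi_nth wf pq by auto
    show "Phi n w m j \<le> Phi n w m i" using fi fj S_anti \<open>p < q\<close> by simp
    assume "j < i"
    then show "Phi n w m j < Phi n w m i"
      using chain[of w n m p q] wf m pq \<open>p < q\<close> fi fj by auto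
  qed
qed


lemma sortw_facts:
  "distinct (sortw n f)" "set (sortw n f) = {1..n}" "length (sortw n f) = n"
  "sorted (map (key n f) (sortw n f))"
  unfolding sortw_def by auto

lemma Phi_sorted:
  assumes w: "w \<in> lin_ext P n" and m: "m \<in> Mset n w"
  shows "sorted (map (key n (Phi n w m)) w)"
proof -
  note wf = lin_ext_facts[OF w]
  show ?thesis unfolding sorted_iff_nth_Suc
  proof (intro allI impI)
    fix p assume "Suc p < length (map (key n (Phi n w m)) w)"
    then have p: "Suc p < n" using wf by simp
    have f1: "Phi n w m (w!p) = S n m p" "Phi n w m (w ! Suc p) = S n m (Suc p)"
      using Phi_nth wf p by auto
    have st: "S n m p = m (Suc p) + S n m (Suc p)" using S_step p by simp
    have mem: "w!p \<in> {1..n}" "w ! Suc p \<in> {1..n}" using wf p nth_mem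
      by (metis Suc_lessD)+
    show "map (key n (Phi n w m)) w ! p \<le> map (key n (Phi n w m)) w ! Suc p"
    proof (cases "m (Suc p) = 0")
      case True
      then have "Suc p \<notin> Des w" using m by (auto simp: Mset_def)
      then have "w ! p \<le> w ! Suc p" using p wf by (auto simp: Des_def)
      then show ?thesis using p wf f1 st True by (simp add: key_le[OF mem])
    next
      case False
      then show ?thesis using p wf f1 st by (simp add: key_le[OF mem])
    qed
  qed
qed

lemma w_unique:
  assumes w: "w \<in> lin_ext P n" and m: "m \<in> Mset n w"
  shows "sortw n (Phi n w m) = w"
proof -
  note wf = lin_ext_facts[OF w]
  let ?k = "key n (Phi n w m)"
  have "map ?k (sortw n (Phi n w m)) = map ?k w"
  proof (rule sorted_distinct_set_unique)
    show "sorted (map ?k (sortw n (Phi n w m)))" using sortw_facts by blast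
    show "sorted (map ?k w)" using Phi_sorted[OF w m] .
    show "distinct (map ?k (sortw n (Phi n w m)))" "distinct (map ?k w)"
      using sortw_facts wf inj_key by (auto simp: distinct_map intro: inj_on_subset)
    show "set (map ?k (sortw n (Phi n w m))) = set (map ?k w)"
      using sortw_facts wf by simp
  qed
  then show ?thesis by (rule map_inj_on) (use inj_key[of n "Phi n w m"] in \<open>simp add: sortw_facts wf\<close>)
qed

lemma m_unique:
  assumes w: "w \<in> lin_ext P n" and m: "m \<in> Mset n w"
  shows "mof n w (Phi n w m) = m"
proof
  fix i
  note wf = lin_ext_facts[OF w]
  show "mof n w (Phi n w m) i = m i"
  proof (cases "i \<in> {1..n}")
    case False
    have "mof n w (Phi n w m) i = 0" unfolding mof_def using False by (rule if_not_P)
    moreover have "m i = 0" using m False by (simp add: Mset_def)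
    ultimately show ?thesis by simp
  next
    case True
    then have a: "Phi n w m (w ! (i-1)) = S n m (i-1)" using Phi_nth[of w n "i-1" m] wf by auto
    have st: "S n m (i-1) = m i + S n m i" using S_step[of "i-1" n m] True by auto
    show ?thesis
    proof (cases "i < n")
      case True
      then show ?thesis using a st Phi_nth[of w n i m] wf \<open>i \<in> {1..n}\<close> by (simp add: mof_def)
    next
      case False
      then have "i = n" using True by simp
      then show ?thesis using a st S_n \<open>i \<in> {1..n}\<close> by (simp add: mof_def)
    qed
  qed
qed




lemma surj_part:
  assumes f: "f \<in> PPartitions P n"
  defines "w \<equiv> sortw n f"
  shows "w \<in> lin_ext P n" "mof n w f \<in> Mset n w" "Phi n w (mof n w f) = f"
proof -
  have d: "distinct w" and s: "set w = {1..n}" and l: "length w = n"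
    and so: "sorted (map (key n f) w)" using sortw_facts unfolding w_def by auto
  have mem: "w ! p \<in> {1..n}" if "p < n" for p using s l that nth_mem by blast
  have kle: "f (w!q) < f (w!p) \<or> (f (w!p) = f (w!q) \<and> w!p \<le> w!q)" if "p \<le> q" "q < n" for p q
  proof -
    have "key n f (w!p) \<le> key n f (w!q)"
      using sorted_nth_mono[OF so, of p q] that l by simp
    then show ?thesis using key_le[OF mem mem] that by simp
  qed
  have mono: "f (w!q) \<le> f (w!p)" if "p \<le> q" "q < n" for p q
    using kle[OF that] by auto
  have fP: "\<And>i j. (i, j) \<in> P \<and> i \<noteq> j \<Longrightarrow> f j \<le> f i \<and> (j < i \<longrightarrow> f j < f i)"
    and f0: "\<And>i. i \<notin> {1..n} \<Longrightarrow> f i = 0" using f by (auto simp: PPartitions_def)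
  show "w \<in> lin_ext P n" unfolding lin_ext_def
  proof (intro CollectI conjI d s allI impI)
    fix a b assume ab: "a < n" "b < n" "(w ! a, w ! b) \<in> P \<and> w ! a \<noteq> w ! b"
    show "a < b"
    proof (rule ccontr)
      assume "\<not> a < b"
      then have "b \<le> a" by simp
      from kle[OF this ab(1)] fP[OF ab(3)] ab(3) show False by auto
    qed
  qed
  show "mof n w f \<in> Mset n w" unfolding Mset_def
  proof (intro CollectI conjI allI impI ballI)
    fix i assume "i \<notin> {1..n}" then show "mof n w f i = 0" unfolding mof_def by (rule if_not_P)
  next
    fix i assume "i \<in> Des w"
    then have i: "1 \<le> i" "i < n" "w ! i < w ! (i-1)" using l by (auto simp: Des_def)
    have "f (w!i) < f (w!(i-1))" using kle[of "i-1" i] i by auto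
    then show "1 \<le> mof n w f i" using i by (simp add: mof_def)
  qed
  have Seq: "p < n \<longrightarrow> S n (mof n w f) p = f (w!p)" for p
  proof (cases "p \<le> n")
    case True
    then show ?thesis
    proof (induction p rule: inc_induct)
      case base then show ?case by simp
    next
      case (step k)
      have st: "S n (mof n w f) k = mof n w f (Suc k) + S n (mof n w f) (Suc k)"
        using S_step step by simp
      show ?case
      proof (cases "Suc k < n")
        case True
        have "mof n w f (Suc k) = f (w!k) - f (w ! Suc k)" using True by (simp add: mof_def)
        then show ?thesis using st step True mono[of k "Suc k"] by simp
      next
        case False
        then have "Suc k = n" using step by simp
        have "mof n w f (Suc k) = f (w!k)" using \<open>Suc k = n\<close> by (auto simp: mof_def)
        then show ?thesis using st S_n[of n] \<open>Suc k = n\<close> by simp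
      qed
    qed
  qed simp
  show "Phi n w (mof n w f) = f"
  proof
    fix a show "Phi n w (mof n w f) a = f a"
    proof (cases "a \<in> {1..n}")
      case True
      then obtain p where "p < n" "a = w ! p" using s l by (metis in_set_conv_nth)
      then show ?thesis using Phi_nth[OF d l] Seq by simp
    next
      case False
      then show ?thesis using Phi_out[of a w] s f0 by simp
    qed
  qed
qed




lemma cP_empty: "cP P {} = 0" unfolding cP_def quotient_empty by (rule card.empty)

lemma take_sub: "w \<in> lin_ext P n \<Longrightarrow> set (take i w) \<subseteq> {1..n}"
  by (metis lin_ext_facts(2) set_take_subset)

lemma xpow_Phi:
  assumes w: "w \<in> lin_ext P n"
  shows "xpow x n (Phi n w m) = (\<Prod>i\<in>{1..n}. xset x (set (take i w)) ^ m i)"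
proof -
  have "xpow x n (Phi n w m) = (\<Prod>a\<in>{1..n}. \<Prod>i\<in>{1..n}. x a ^ (if a \<in> set (take i w) then m i else 0))"
    unfolding xpow_def Phi_def by (simp add: power_sum)
  also have "\<dots> = (\<Prod>i\<in>{1..n}. \<Prod>a\<in>{1..n}. x a ^ (if a \<in> set (take i w) then m i else 0))"
    by (rule prod.swap)
  also have "\<dots> = (\<Prod>i\<in>{1..n}. \<Prod>a\<in>{1..n}. if a \<in> set (take i w) then x a ^ m i else 1)"
    by (intro prod.cong refl) auto
  also have "\<dots> = (\<Prod>i\<in>{1..n}. \<Prod>a\<in>set (take i w). x a ^ m i)"
  proof (rule prod.cong[OF refl])
    fix i
    have "(\<Prod>a\<in>{1..n}. if a \<in> set (take i w) then x a ^ m i else 1) = (\<Prod>a\<in>{a\<in>{1..n}. a \<in> set (take i w)}. x a ^ m i)"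
      by (rule prod.inter_filter[symmetric]) simp
    also have "{a\<in>{1..n}. a \<in> set (take i w)} = set (take i w)" using take_sub[OF w] by blast
    finally show "(\<Prod>a\<in>{1..n}. if a \<in> set (take i w) then x a ^ m i else 1) = (\<Prod>a\<in>set (take i w). x a ^ m i)" .
  qed
  also have "\<dots> = (\<Prod>i\<in>{1..n}. xset x (set (take i w)) ^ m i)"
    unfolding xset_def by (simp add: prod_power_distrib)
  finally show ?thesis .
qed

lemma nu_Phi:
  assumes w: "w \<in> lin_ext P n" and m: "m \<in> Mset n w"
  shows "nu P n (Phi n w m) = (\<Sum>i\<in>{1..n}. m i * cP P (set (take i w)))"
proof -
  note wf = lin_ext_facts[OF w]
  define f where "f = Phi n w m"
  define L where "L k = {j \<in> {1..n}. k \<le> f j}" for k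
  have fS: "f (w!p) = S n m p" if "p < n" for p using Phi_nth wf that f_def by simp
  have pos: "\<exists>p<n. a = w ! p" if "a \<in> {1..n}" for a
    using that wf by (metis in_set_conv_nth)
  have Lk: "L k = set (take (Suc j) w)" if j: "j < n" "S n m (Suc j) < k" "k \<le> S n m j" for j k
  proof
    show "L k \<subseteq> set (take (Suc j) w)"
    proof
      fix a assume "a \<in> L k"
      then obtain p where p: "p < n" "a = w ! p" "k \<le> S n m p" using pos fS unfolding L_def by force
      have "p < Suc j"
      proof (rule ccontr)
        assume "\<not> p < Suc j" then have "S n m p \<le> S n m (Suc j)" using S_anti by simp
        then show False using p j by simp
      qed
      then show "a \<in> set (take (Suc j) w)" using nth_in_take[of w p "Suc j"] wf p by simp
    qed
  next
    show "set (take (Suc j) w) \<subseteq> L k"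
    proof
      fix a assume a: "a \<in> set (take (Suc j) w)"
      then have "a \<in> {1..n}" using take_sub[OF w] by blast
      then obtain p where p: "p < n" "a = w ! p" using pos by blast
      then have "p \<le> j" using nth_in_take[of w p "Suc j"] wf a by simp
      then have "S n m j \<le> S n m p" using S_anti by simp
      then show "a \<in> L k" unfolding L_def using \<open>a \<in> {1..n}\<close> p fS j by simp
    qed
  qed
  have ind: "j \<le> n \<Longrightarrow> (\<Sum>k\<in>{S n m j<..S n m 0}. cP P (L k)) = (\<Sum>i\<in>{1..j}. m i * cP P (set (take i w)))" for j
  proof (induction j)
    case 0 then show ?case by simp
  next
    case (Suc j)
    have a1: "S n m (Suc j) \<le> S n m j" "S n m j \<le> S n m 0" using S_anti by auto
    have un: "{S n m (Suc j)<..S n m 0} = {S n m (Suc j)<..S n m j} \<union> {S n m j<..S n m 0}"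
      using a1 by auto
    have "(\<Sum>k\<in>{S n m (Suc j)<..S n m j}. cP P (L k)) = (\<Sum>k\<in>{S n m (Suc j)<..S n m j}. cP P (set (take (Suc j) w)))"
      using Lk[of j] Suc.prems by (intro sum.cong refl) simp
    also have "\<dots> = m (Suc j) * cP P (set (take (Suc j) w))"
      using S_step[of j n m] Suc.prems by simp
    finally have e: "(\<Sum>k\<in>{S n m (Suc j)<..S n m j}. cP P (L k)) = m (Suc j) * cP P (set (take (Suc j) w))" .
    have "(\<Sum>k\<in>{S n m (Suc j)<..S n m 0}. cP P (L k)) =
      (\<Sum>k\<in>{S n m (Suc j)<..S n m j}. cP P (L k)) + (\<Sum>k\<in>{S n m j<..S n m 0}. cP P (L k))"
      unfolding un by (rule sum.union_disjoint) auto
    then show ?case using e Suc by simp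
  qed
  have S0: "S n m 0 \<le> fsize n f"
  proof (cases "n = 0")
    case True then show ?thesis by (simp add: S_def)
  next
    case False
    then have "w ! 0 \<in> {1..n}" using wf nth_mem by (metis gr0I)
    then have "f (w ! 0) \<le> fsize n f" unfolding fsize_def by (intro member_le_sum) auto
    then show ?thesis using fS False by simp
  qed
  have Lempty: "L k = {}" if "S n m 0 < k" for k
  proof -
    have "f a < k" if "a \<in> {1..n}" for a
    proof -
      obtain p where "p < n" "a = w ! p" using pos \<open>a \<in> {1..n}\<close> by blast
      then show ?thesis using fS S_anti[of 0 p n m] \<open>S n m 0 < k\<close> by simp
    qed
    then show ?thesis unfolding L_def by force
  qed
  have "nu P n f = (\<Sum>k\<in>{0<..fsize n f}. cP P (L k))"
    unfolding nu_def L_def by (simp add: atLeastSucAtMost_greaterThanAtMost[symmetric])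
  also have "{0<..fsize n f} = {0<..S n m 0} \<union> {S n m 0<..fsize n f}" using S0 by auto
  also have "(\<Sum>k\<in>{0<..S n m 0} \<union> {S n m 0<..fsize n f}. cP P (L k)) =
     (\<Sum>k\<in>{0<..S n m 0}. cP P (L k)) + (\<Sum>k\<in>{S n m 0<..fsize n f}. cP P (L k))"
    by (rule sum.union_disjoint) auto
  also have "(\<Sum>k\<in>{S n m 0<..fsize n f}. cP P (L k)) = 0"
    using Lempty cP_empty by (intro sum.neutral) auto
  also have "(\<Sum>k\<in>{0<..S n m 0}. cP P (L k)) = (\<Sum>i\<in>{1..n}. m i * cP P (set (take i w)))"
    using ind[of n] S_n[of n m] by simp
  finally show ?thesis unfolding f_def by simp
qed

lemma summand:
  assumes w: "w \<in> lin_ext P n" and m: "m \<in> Mset n w"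
  shows "t ^ nu P n (Phi n w m) * xpow x n (Phi n w m) =
    (\<Prod>i\<in>{1..n}. (t ^ cP P (set (take i w)) * xset x (set (take i w))) ^ m i)"
proof -
  have "t ^ nu P n (Phi n w m) = (\<Prod>i\<in>{1..n}. (t ^ cP P (set (take i w))) ^ m i)"
    unfolding nu_Phi[OF w m] power_sum by (intro prod.cong refl) (simp add: power_mult[symmetric] mult.commute)
  then show ?thesis unfolding xpow_Phi[OF w]
    by (simp add: prod.distrib power_mult_distrib)
qed




lemma finite_lin_ext: "finite (lin_ext P n)"
proof -
  have "lin_ext P n \<subseteq> {w. set w \<subseteq> {1..n} \<and> length w = n}"
    using lin_ext_facts by blast
  moreover have "finite {w. set w \<subseteq> {1..n} \<and> length w = (n::nat)}"
    by (rule finite_lists_length_eq) simp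
  ultimately show ?thesis by (rule finite_subset)
qed

lemma main:
  fixes t :: complex and x :: "nat \<Rightarrow> complex"
  assumes po: "partial_order_on {1..n} P"
  and zlt: "\<And>w i. w \<in> lin_ext P n \<Longrightarrow> i \<in> {1..n} \<Longrightarrow>
     norm (t ^ cP P (set (take i w)) * xset x (set (take i w))) < 1"
  shows "((\<lambda>f. t ^ nu P n f * xpow x n f) has_sum
     (\<Sum>w\<in>lin_ext P n. t ^ desP P w * (\<Prod>i\<in>Des w. xset x (set (take i w))) /
        (\<Prod>i\<in>{1..n}. 1 - t ^ cP P (set (take i w)) * xset x (set (take i w))))) (PPartitions P n)"
proof -
  define g where "g f = t ^ nu P n f * xpow x n f" for f
  define z where "z w i = t ^ cP P (set (take i w)) * xset x (set (take i w))" for w i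
  define val where "val w = t ^ desP P w * (\<Prod>i\<in>Des w. xset x (set (take i w))) /
        (\<Prod>i\<in>{1..n}. 1 - z w i)" for w
  have union: "PPartitions P n = (\<Union>w\<in>lin_ext P n. Phi n w ` Mset n w)"
  proof
    show "PPartitions P n \<subseteq> (\<Union>w\<in>lin_ext P n. Phi n w ` Mset n w)"
    proof
      fix f assume f: "f \<in> PPartitions P n"
      note sp = surj_part[OF f]
      then show "f \<in> (\<Union>w\<in>lin_ext P n. Phi n w ` Mset n w)"
        by (metis (no_types, lifting) UN_iff image_eqI)
    qed
    show "(\<Union>w\<in>lin_ext P n. Phi n w ` Mset n w) \<subseteq> PPartitions P n"
      using Phi_in_PP[OF po] by blast
  qed
  have disj: "Phi n w ` Mset n w \<inter> Phi n w' ` Mset n w' = {}"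
    if "w \<in> lin_ext P n" "w' \<in> lin_ext P n" "w \<noteq> w'" for w w'
  proof (rule ccontr)
    assume "Phi n w ` Mset n w \<inter> Phi n w' ` Mset n w' \<noteq> {}"
    then obtain m m' where mm: "m \<in> Mset n w" "m' \<in> Mset n w'" "Phi n w m = Phi n w' m'" by blast
    then have "w = w'" using w_unique[OF that(1) mm(1)] w_unique[OF that(2) mm(2)] by simp
    then show False using that by simp
  qed
  have per: "(g has_sum val w) (Phi n w ` Mset n w)" if w: "w \<in> lin_ext P n" for w
  proof -
    note wf = lin_ext_facts[OF w]
    have Dsub: "Des w \<subseteq> {1..n}" using Des_sub[of w] wf by force
    have inj: "inj_on (Phi n w) (Mset n w)"
      by (rule inj_onI) (metis m_unique[OF w])
    define B where "B i = (if i \<in> Des w then {1..} else (UNIV :: nat set))" for i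
    define G where "G i = (if i \<in> Des w then z w i / (1 - z w i) else 1 / (1 - z w i))" for i
    have zl: "norm (z w i) < 1" if "i \<in> {1..n}" for i using zlt[OF w that] by (simp add: z_def)
    have geo: "((\<lambda>k. z w i ^ k) has_sum G i) (B i)" if "i \<in> {1..n}" for i
      using has_sum_geometric_from_1[OF zl[OF that]] has_sum_geom_UNIV[OF zl[OF that]]
      by (simp add: B_def G_def)
    have pg: "((\<lambda>m. \<Prod>i\<in>{1..n}. z w i ^ m i) has_sum (\<Prod>i\<in>{1..n}. G i))
      {m. (\<forall>i. i \<notin> {1..n} \<longrightarrow> m i = 0) \<and> (\<forall>i\<in>{1..n}. m i \<in> B i)}"
      by (rule prod_geom) (use zl geo in auto)
    have Meq: "{m. (\<forall>i. i \<notin> {1..n} \<longrightarrow> m i = 0) \<and> (\<forall>i\<in>{1..n}. m i \<in> B i)} = Mset n w"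
      unfolding Mset_def B_def using Dsub by auto
    have Geq: "(\<Prod>i\<in>{1..n}. G i) = val w"
    proof -
      have "(\<Prod>i\<in>{1..n}. G i) = (\<Prod>i\<in>{1..n}. (if i \<in> Des w then z w i else 1) / (1 - z w i))"
        unfolding G_def by (intro prod.cong refl) auto
      also have "\<dots> = (\<Prod>i\<in>{1..n}. (if i \<in> Des w then z w i else 1)) / (\<Prod>i\<in>{1..n}. 1 - z w i)"
        by (rule prod_dividef)
      also have "(\<Prod>i\<in>{1..n}. (if i \<in> Des w then z w i else 1)) = (\<Prod>i\<in>{1..n} \<inter> Des w. z w i)"
        by (rule prod.inter_restrict[symmetric]) simp 
      also have "{1..n} \<inter> Des w = Des w" using Dsub by auto
      also have "(\<Prod>i\<in>Des w. z w i) = t ^ desP P w * (\<Prod>i\<in>Des w. xset x (set (take i w)))"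
        unfolding z_def desP_def by (simp add: prod.distrib power_sum)
      finally show ?thesis unfolding val_def .
    qed
    have "((g \<circ> Phi n w) has_sum val w) (Mset n w)"
    proof -
      have "((\<lambda>m. \<Prod>i\<in>{1..n}. z w i ^ m i) has_sum val w) (Mset n w)"
        using pg Meq Geq by simp
      then show ?thesis
        by (rule has_sum_cong[THEN iffD1, rotated])
           (simp add: g_def z_def summand[OF w])
    qed
    then show ?thesis using has_sum_reindex[OF inj] by blast
  qed
  have "(g has_sum (\<Sum>w\<in>lin_ext P n. val w)) (\<Union>w\<in>lin_ext P n. Phi n w ` Mset n w)"
    by (rule sum_has_sum[OF finite_lin_ext per disj])
  then show ?thesis unfolding union[symmetric] g_def val_def z_def .
qed




lemma prod_lt_1:
  fixes r :: "nat \<Rightarrow> real"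
  assumes "finite A" "A \<noteq> {}" "\<And>a. a \<in> A \<Longrightarrow> 0 \<le> r a \<and> r a < 1"
  shows "(\<Prod>a\<in>A. r a) < 1"
  using assms
proof (induction A rule: finite_ne_induct)
  case (singleton x) then show ?case by simp
next
  case (insert a F)
  have "0 \<le> r a" "r a < 1" using insert by auto
  moreover have "(\<Prod>a\<in>F. r a) < 1" "0 \<le> (\<Prod>a\<in>F. r a)" using insert by (auto intro: prod_nonneg)
  ultimately have "r a * (\<Prod>a\<in>F. r a) \<le> r a"
    by (intro mult_left_le) auto
  then have "r a * (\<Prod>a\<in>F. r a) < 1" using \<open>r a < 1\<close> by linarith
  then show ?case using insert by simp
qed

lemma take_ne: "w \<in> lin_ext P n \<Longrightarrow> i \<in> {1..n} \<Longrightarrow> set (take i w) \<noteq> {}"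
  using lin_ext_facts(3)[of w P n] by (cases w) auto

lemma card_take: "w \<in> lin_ext P n \<Longrightarrow> i \<in> {1..n} \<Longrightarrow> card (set (take i w)) = i"
  using lin_ext_facts[of w P n] by (simp add: distinct_card)

lemma xset_lt:
  fixes x :: "nat \<Rightarrow> complex"
  assumes "w \<in> lin_ext P n" "i \<in> {1..n}" "\<forall>i\<in>{1..n}. norm (x i) < 1"
  shows "norm (xset x (set (take i w))) < 1"
proof -
  have "norm (xset x (set (take i w))) = (\<Prod>a\<in>set (take i w). norm (x a))"
    unfolding xset_def by (simp add: prod_norm)
  also have "\<dots> < 1"
    using take_ne[OF assms(1,2)] take_sub[OF assms(1), of i] assms(3)
    by (intro prod_lt_1) auto
  finally show ?thesis .
qed

lemma cP_pos: "finite A \<Longrightarrow> A \<noteq> {} \<Longrightarrow> 1 \<le> cP P A"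
proof -
  assume "finite A" "A \<noteq> {}"
  have eq: "A // (hasse_edges P A)\<^sup>* = (\<lambda>a. (hasse_edges P A)\<^sup>* `` {a}) ` A"
    unfolding quotient_def by auto
  have "finite (A // (hasse_edges P A)\<^sup>*)" unfolding eq using \<open>finite A\<close> by simp
  moreover have "A // (hasse_edges P A)\<^sup>* \<noteq> {}" unfolding eq using \<open>A \<noteq> {}\<close> by simp
  ultimately show ?thesis unfolding cP_def by (simp add: Suc_le_eq card_gt_0_iff)
qed

lemma part1:
  assumes "partial_order_on {1..n} P"
  shows "\<forall>(x :: nat \<Rightarrow> complex) (t :: complex).
       (\<forall>i\<in>{1..n}. norm (x i) < 1) \<and> norm t \<le> 1 \<longrightarrow>
       ((\<lambda>f. t ^ nu P n f * xpow x n f) has_sum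
          (\<Sum>w\<in>lin_ext P n. t ^ desP P w * (\<Prod>i\<in>Des w. xset x (set (take i w))) /
              (\<Prod>i\<in>{1..n}. 1 - t ^ cP P (set (take i w)) * xset x (set (take i w)))))
        (PPartitions P n)"
proof (intro allI impI)
  fix x :: "nat \<Rightarrow> complex" and t :: complex
  assume a: "(\<forall>i\<in>{1..n}. norm (x i) < 1) \<and> norm t \<le> 1"
  show "((\<lambda>f. t ^ nu P n f * xpow x n f) has_sum
          (\<Sum>w\<in>lin_ext P n. t ^ desP P w * (\<Prod>i\<in>Des w. xset x (set (take i w))) /
              (\<Prod>i\<in>{1..n}. 1 - t ^ cP P (set (take i w)) * xset x (set (take i w)))))
        (PPartitions P n)"
  proof (rule main[OF assms])
    fix w i assume wi: "w \<in> lin_ext P n" "i \<in> {1..n}"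
    have "norm (t ^ cP P (set (take i w))) \<le> 1" using a by (simp add: norm_power power_le_one)
    moreover have "norm (xset x (set (take i w))) < 1" using xset_lt[OF wi] a by simp
    moreover have "norm (t ^ cP P (set (take i w))) * norm (xset x (set (take i w))) \<le> norm (xset x (set (take i w)))"
      using calculation(1) by (intro mult_left_le_one_le) auto
    ultimately show "norm (t ^ cP P (set (take i w)) * xset x (set (take i w))) < 1"
      unfolding norm_mult by linarith
  qed
qed

lemma part2:
  assumes "partial_order_on {1..n} P"
  shows "\<forall>(x :: nat \<Rightarrow> complex).
       (\<forall>i\<in>{1..n}. norm (x i) < 1) \<longrightarrow>
       ((\<lambda>f. xpow x n f) has_sum
          (\<Sum>w\<in>lin_ext P n. (\<Prod>i\<in>Des w. xset x (set (take i w))) /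
              (\<Prod>i\<in>{1..n}. 1 - xset x (set (take i w)))))
        (PPartitions P n)"
proof (intro allI impI)
  fix x :: "nat \<Rightarrow> complex" assume a: "\<forall>i\<in>{1..n}. norm (x i) < 1"
  have "((\<lambda>f. 1 ^ nu P n f * xpow x n f) has_sum
          (\<Sum>w\<in>lin_ext P n. 1 ^ desP P w * (\<Prod>i\<in>Des w. xset x (set (take i w))) /
              (\<Prod>i\<in>{1..n}. 1 - 1 ^ cP P (set (take i w)) * xset x (set (take i w)))))
        (PPartitions P n)"
    by (rule part1[OF assms, rule_format]) (use a in simp)
  then show "((\<lambda>f. xpow x n f) has_sum
          (\<Sum>w\<in>lin_ext P n. (\<Prod>i\<in>Des w. xset x (set (take i w))) /
              (\<Prod>i\<in>{1..n}. 1 - xset x (set (take i w)))))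
        (PPartitions P n)" by simp
qed

lemma part3:
  assumes "partial_order_on {1..n} P"
  shows "\<forall>(q :: complex) (t :: complex).
       norm q < 1 \<and> norm t \<le> 1 \<longrightarrow>
       ((\<lambda>f. t ^ nu P n f * q ^ fsize n f) has_sum
          (\<Sum>w\<in>lin_ext P n. t ^ desP P w * q ^ maj w /
              (\<Prod>i\<in>{1..n}. 1 - t ^ cP P (set (take i w)) * q ^ i)))
        (PPartitions P n)"
proof (intro allI impI)
  fix q t :: complex assume a: "norm q < 1 \<and> norm t \<le> 1"
  have h: "((\<lambda>f. t ^ nu P n f * xpow (\<lambda>_. q) n f) has_sum
          (\<Sum>w\<in>lin_ext P n. t ^ desP P w * (\<Prod>i\<in>Des w. xset (\<lambda>_. q) (set (take i w))) /
              (\<Prod>i\<in>{1..n}. 1 - t ^ cP P (set (take i w)) * xset (\<lambda>_. q) (set (take i w)))))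
        (PPartitions P n)"
    by (rule part1[OF assms, rule_format]) (use a in simp)
  have xp: "xpow (\<lambda>_. q) n f = q ^ fsize n f" for f
    unfolding xpow_def fsize_def by (simp add: power_sum)
  have xs: "xset (\<lambda>_. q) (set (take i w)) = q ^ i" if "w \<in> lin_ext P n" "i \<in> {1..n}" for w i
    unfolding xset_def using card_take[OF that] by simp
  have Dsub: "Des w \<subseteq> {1..n}" if "w \<in> lin_ext P n" for w
    using Des_sub[of w] lin_ext_facts[OF that] by force
  have "(\<Sum>w\<in>lin_ext P n. t ^ desP P w * (\<Prod>i\<in>Des w. xset (\<lambda>_. q) (set (take i w))) /
              (\<Prod>i\<in>{1..n}. 1 - t ^ cP P (set (take i w)) * xset (\<lambda>_. q) (set (take i w))))
     = (\<Sum>w\<in>lin_ext P n. t ^ desP P w * q ^ maj w /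
              (\<Prod>i\<in>{1..n}. 1 - t ^ cP P (set (take i w)) * q ^ i))"
  proof (rule sum.cong[OF refl])
    fix w assume w: "w \<in> lin_ext P n"
    have "(\<Prod>i\<in>Des w. xset (\<lambda>_. q) (set (take i w))) = (\<Prod>i\<in>Des w. q ^ i)"
      using xs[OF w] Dsub[OF w] by (intro prod.cong refl) auto
    also have "\<dots> = q ^ maj w" unfolding maj_def by (simp add: power_sum)
    finally show "t ^ desP P w * (\<Prod>i\<in>Des w. xset (\<lambda>_. q) (set (take i w))) /
              (\<Prod>i\<in>{1..n}. 1 - t ^ cP P (set (take i w)) * xset (\<lambda>_. q) (set (take i w)))
       = t ^ desP P w * q ^ maj w / (\<Prod>i\<in>{1..n}. 1 - t ^ cP P (set (take i w)) * q ^ i)"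
      using xs[OF w] by simp
  qed
  then show "((\<lambda>f. t ^ nu P n f * q ^ fsize n f) has_sum
          (\<Sum>w\<in>lin_ext P n. t ^ desP P w * q ^ maj w /
              (\<Prod>i\<in>{1..n}. 1 - t ^ cP P (set (take i w)) * q ^ i)))
        (PPartitions P n)"
    using h by (simp add: xp)
qed

lemma part4:
  assumes "partial_order_on {1..n} P"
  shows "\<forall>(t :: complex).
       norm t < 1 \<longrightarrow>
       ((\<lambda>f. t ^ nu P n f) has_sum
          (\<Sum>w\<in>lin_ext P n. t ^ desP P w /
              (\<Prod>i\<in>{1..n}. 1 - t ^ cP P (set (take i w)))))
        (PPartitions P n)"
proof (intro allI impI)
  fix t :: complex assume a: "norm t < 1"
  have x1: "xset (\<lambda>_. 1::complex) A = 1" for A unfolding xset_def by simp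
  have x2: "xpow (\<lambda>_. 1::complex) n f = 1" for f unfolding xpow_def by simp
  have "((\<lambda>f. t ^ nu P n f * xpow (\<lambda>_. 1) n f) has_sum
     (\<Sum>w\<in>lin_ext P n. t ^ desP P w * (\<Prod>i\<in>Des w. xset (\<lambda>_. 1) (set (take i w))) /
        (\<Prod>i\<in>{1..n}. 1 - t ^ cP P (set (take i w)) * xset (\<lambda>_. 1) (set (take i w))))) (PPartitions P n)"
  proof (rule main[OF assms])
    fix w i assume wi: "w \<in> lin_ext P n" "i \<in> {1..n}"
    have c: "1 \<le> cP P (set (take i w))" using cP_pos take_ne[OF wi] by blast
    have "norm t ^ cP P (set (take i w)) < 1"
      using c a by (simp add: power_less_one_iff)
    then show "norm (t ^ cP P (set (take i w)) * xset (\<lambda>_. 1) (set (take i w))) < 1"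
      by (simp add: x1 norm_power)
  qed
  then show "((\<lambda>f. t ^ nu P n f) has_sum
          (\<Sum>w\<in>lin_ext P n. t ^ desP P w /
              (\<Prod>i\<in>{1..n}. 1 - t ^ cP P (set (take i w)))))
        (PPartitions P n)" by (simp add: x1 x2)
qed

lemma prod_ne0:
  fixes q :: complex assumes "norm q < 1"
  shows "(\<Prod>i\<in>{1..n}. 1 - q ^ i) \<noteq> 0"
proof -
  have "1 - q ^ i \<noteq> 0" if "i \<in> {1..n}" for i
  proof
    assume "1 - q ^ i = 0"
    then have "q ^ i = 1" by simp
    then have "norm (q ^ i) = 1" by simp
    moreover have "norm (q ^ i) < 1" using that assms by (simp add: norm_power power_less_one_iff)
    ultimately show False by simp
  qed
  then show ?thesis by (subst prod_zero_iff) auto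
qed

lemma part5:
  assumes "partial_order_on {1..n} P"
  shows "\<forall>(q :: complex). norm q < 1 \<longrightarrow>
       (\<Prod>i\<in>{1..n}. 1 - q ^ i) * (\<Sum>\<^sub>\<infinity>f\<in>PPartitions P n. q ^ fsize n f)
         = (\<Sum>w\<in>lin_ext P n. q ^ maj w)"
proof (intro allI impI)
  fix q :: complex assume a: "norm q < 1"
  have "((\<lambda>f. 1 ^ nu P n f * q ^ fsize n f) has_sum
          (\<Sum>w\<in>lin_ext P n. 1 ^ desP P w * q ^ maj w /
              (\<Prod>i\<in>{1..n}. 1 - 1 ^ cP P (set (take i w)) * q ^ i)))
        (PPartitions P n)" by (rule part3[OF assms, rule_format]) (use a in simp)
  then have "((\<lambda>f. q ^ fsize n f) has_sum
          (\<Sum>w\<in>lin_ext P n. q ^ maj w / (\<Prod>i\<in>{1..n}. 1 - q ^ i))) (PPartitions P n)" by simp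
  then have "(\<Sum>\<^sub>\<infinity>f\<in>PPartitions P n. q ^ fsize n f) = (\<Sum>w\<in>lin_ext P n. q ^ maj w / (\<Prod>i\<in>{1..n}. 1 - q ^ i))"
    by (rule infsumI)
  then show "(\<Prod>i\<in>{1..n}. 1 - q ^ i) * (\<Sum>\<^sub>\<infinity>f\<in>PPartitions P n. q ^ fsize n f)
         = (\<Sum>w\<in>lin_ext P n. q ^ maj w)"
    using prod_ne0[OF a, of n] by (simp add: sum_distrib_left)
qed

lemma part6:
  assumes "partial_order_on {1..n} P"
  shows "((\<lambda>q :: complex. (\<Prod>i\<in>{1..n}. 1 - q ^ i) * (\<Sum>\<^sub>\<infinity>f\<in>PPartitions P n. q ^ fsize n f))
       \<longlongrightarrow> of_nat (card (lin_ext P n))) (at 1 within ball 0 1)"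
proof -
  have lim: "((\<lambda>q :: complex. \<Sum>w\<in>lin_ext P n. q ^ maj w) \<longlongrightarrow> (\<Sum>w\<in>lin_ext P n. 1 ^ maj w)) (at 1 within ball 0 1)"
    by (intro tendsto_intros)
  have eq: "(\<Sum>w\<in>lin_ext P n. q ^ maj w) =
      (\<Prod>i\<in>{1..n}. 1 - q ^ i) * (\<Sum>\<^sub>\<infinity>f\<in>PPartitions P n. q ^ fsize n f)"
    if "q \<in> ball 0 1" for q :: complex
  proof -
    have "norm q < 1" using that by simp
    then show ?thesis using part5[OF assms, rule_format, of q] by simp
  qed
  have ev: "eventually (\<lambda>q::complex. (\<Sum>w\<in>lin_ext P n. q ^ maj w) =
      (\<Prod>i\<in>{1..n}. 1 - q ^ i) * (\<Sum>\<^sub>\<infinity>f\<in>PPartitions P n. q ^ fsize n f)) (at 1 within ball 0 1)"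
    unfolding eventually_at_filter by (rule always_eventually) (simp add: eq)
  show ?thesis using tendsto_cong[OF ev] lim by simp
qed


theorem corollary3p2:
  fixes P :: "(nat \<times> nat) set" and n :: nat
  assumes "partial_order_on {1..n} P"
  shows
   "(\<forall>(x :: nat \<Rightarrow> complex) (t :: complex).
       (\<forall>i\<in>{1..n}. norm (x i) < 1) \<and> norm t \<le> 1 \<longrightarrow>
       ((\<lambda>f. t ^ nu P n f * xpow x n f) has_sum
          (\<Sum>w\<in>lin_ext P n. t ^ desP P w * (\<Prod>i\<in>Des w. xset x (set (take i w))) /
              (\<Prod>i\<in>{1..n}. 1 - t ^ cP P (set (take i w)) * xset x (set (take i w)))))
        (PPartitions P n))
  \<and> (\<forall>(x :: nat \<Rightarrow> complex).
       (\<forall>i\<in>{1..n}. norm (x i) < 1) \<longrightarrow>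
       ((\<lambda>f. xpow x n f) has_sum
          (\<Sum>w\<in>lin_ext P n. (\<Prod>i\<in>Des w. xset x (set (take i w))) /
              (\<Prod>i\<in>{1..n}. 1 - xset x (set (take i w)))))
        (PPartitions P n))
  \<and> (\<forall>(q :: complex) (t :: complex).
       norm q < 1 \<and> norm t \<le> 1 \<longrightarrow>
       ((\<lambda>f. t ^ nu P n f * q ^ fsize n f) has_sum
          (\<Sum>w\<in>lin_ext P n. t ^ desP P w * q ^ maj w /
              (\<Prod>i\<in>{1..n}. 1 - t ^ cP P (set (take i w)) * q ^ i)))
        (PPartitions P n))
  \<and> (\<forall>(t :: complex).
       norm t < 1 \<longrightarrow>
       ((\<lambda>f. t ^ nu P n f) has_sum
          (\<Sum>w\<in>lin_ext P n. t ^ desP P w /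
              (\<Prod>i\<in>{1..n}. 1 - t ^ cP P (set (take i w)))))
        (PPartitions P n))
  \<and> (\<forall>(q :: complex). norm q < 1 \<longrightarrow>
       (\<Prod>i\<in>{1..n}. 1 - q ^ i) * (\<Sum>\<^sub>\<infinity>f\<in>PPartitions P n. q ^ fsize n f)
         = (\<Sum>w\<in>lin_ext P n. q ^ maj w))
  \<and> ((\<lambda>q :: complex. (\<Prod>i\<in>{1..n}. 1 - q ^ i) * (\<Sum>\<^sub>\<infinity>f\<in>PPartitions P n. q ^ fsize n f))
       \<longlongrightarrow> of_nat (card (lin_ext P n))) (at 1 within ball 0 1)"
    by (intro conjI part1[OF assms] part2[OF assms] part3[OF assms] part4[OF assms]
      part5[OF assms] part6[OF assms])

end
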